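(* Let $E>0$ and let $(H_0,H_A,H_B)$ be one of the two choices (a) transverse field: $H_0=E(\sigma_x\otimes I_2+\sigma_y\otimes I_2+I_2\otimes\sigma_x+I_2\otimes\sigma_y)$, $H_A=H_B=E(\sigma_x+\sigma_y)$; (b) longitudinal field: $H_0=E(\sigma_z\otimes I_2+I_2\otimes\sigma_z)$, $H_A=H_B=E\sigma_z$. Let $H_{\mathrm{int}}$ be any Hermitian operator on $\mathbb{C}^2\otimes\mathbb{C}^2$ and $H=H_0+H_{\mathrm{int}}$. Let $\rho$ be a two-qubit density matrix with reduced states $\rho_A=\mathrm{Tr}_B\rho$, $\rho_B=\mathrm{Tr}_A\rho$. If $\mathcal{C}(\rho;H)\ge \mathcal{C}(\rho;H_0)$, then $$\mathcal{C}(\rho_A;H_A)+\mathcal{C}(\rho_B;H_B)\le \mathcal{C}(\rho;H).$$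
   Context: Quantum battery capacity: for a Hermitian $H$ on $\mathbb{C}^d$ with eigenvalues $\epsilon_0\le\epsilon_1\le\dots\le\epsilon_{d-1}$ and a density matrix $\rho$ on $\mathbb{C}^d$ with eigenvalues $\lambda_0\le\lambda_1\le\dots\le\lambda_{d-1}$, $\mathcal{C}(\rho;H)=\sum_{i=0}^{d-1}\epsilon_i(\lambda_i-\lambda_{d-1-i})$. $\sigma_x,\sigma_y,\sigma_z$ are the Pauli matrices and $I_2$ the $2\times 2$ identity. *)

theory Defs
  imports "Jordan_Normal_Form.Matrix" "Jordan_Normal_Form.Char_Poly"
begin

definition hermitian :: "nat \<Rightarrow> complex mat \<Rightarrow> bool" where
  "hermitian n A \<longleftrightarrow> A \<in> carrier_mat n n \<and>
     (\<forall>i<n. \<forall>j<n. A $$ (i, j) = cnj (A $$ (j, i)))"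

definition psd :: "nat \<Rightarrow> complex mat \<Rightarrow> bool" where
  "psd n A \<longleftrightarrow> hermitian n A \<and>
     (\<forall>v \<in> carrier_vec n. 0 \<le> Re (\<Sum>i<n. cnj (v $ i) * (A *\<^sub>v v) $ i))"

definition density :: "nat \<Rightarrow> complex mat \<Rightarrow> bool" where
  "density n \<rho> \<longleftrightarrow> psd n \<rho> \<and> (\<Sum>i<n. \<rho> $$ (i, i)) = 1"

(* eigenvalues (with multiplicity, roots of the characteristic polynomial),
   real parts (they are real for Hermitian matrices), in nondecreasing order *)
definition eigs :: "complex mat \<Rightarrow> real list" where
  "eigs A = sorted_list_of_multiset (image_mset Re (proots (char_poly A)))"

definition capacity :: "complex mat \<Rightarrow> complex mat \<Rightarrow> real" where
  "capacity \<rho> H = (let d = dim_row H; e = eigs H; l = eigs \<rho> in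
      \<Sum>i<d. e ! i * (l ! i - l ! (d - 1 - i)))"

definition sigma_x :: "complex mat" where
  "sigma_x = mat_of_rows_list 2 [[0, 1], [1, 0]]"
definition sigma_y :: "complex mat" where
  "sigma_y = mat_of_rows_list 2 [[0, -\<i>], [\<i>, 0]]"
definition sigma_z :: "complex mat" where
  "sigma_z = mat_of_rows_list 2 [[1, 0], [0, -1]]"
definition I2 :: "complex mat" where
  "I2 = 1\<^sub>m 2"

(* Kronecker product of two 2x2 matrices, basis |ab> indexed by 2a+b *)
definition tensor2 :: "complex mat \<Rightarrow> complex mat \<Rightarrow> complex mat" where
  "tensor2 A B = mat 4 4 (\<lambda>(i, j). A $$ (i div 2, j div 2) * B $$ (i mod 2, j mod 2))"

definition ptrace_B :: "complex mat \<Rightarrow> complex mat" where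
  "ptrace_B \<rho> = mat 2 2 (\<lambda>(i, j). \<Sum>k<2. \<rho> $$ (2 * i + k, 2 * j + k))"
definition ptrace_A :: "complex mat \<Rightarrow> complex mat" where
  "ptrace_A \<rho> = mat 2 2 (\<lambda>(i, j). \<Sum>k<2. \<rho> $$ (2 * k + i, 2 * k + j))"

end

theory Submission
  imports Defs "HOL-Analysis.Elementary_Topology"
begin

definition qf :: "(nat \<Rightarrow> nat \<Rightarrow> complex) \<Rightarrow> nat \<Rightarrow> (nat \<Rightarrow> complex) \<Rightarrow> complex" where
  "qf a n x = (\<Sum>i<n. \<Sum>j<n. cnj (x i) * a i j * x j)"
definition nrm :: "nat \<Rightarrow> (nat \<Rightarrow> complex) \<Rightarrow> complex" where
  "nrm n x = (\<Sum>i<n. cnj (x i) * x i)"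
definition herm :: "(nat \<Rightarrow> nat \<Rightarrow> complex) \<Rightarrow> nat \<Rightarrow> bool" where
  "herm a n \<longleftrightarrow> (\<forall>i<n. \<forall>j<n. a i j = cnj (a j i))"

lemma cnj_mult_self: "cnj z * z = complex_of_real ((cmod z)^2)"
  by (metis complex_norm_square mult.commute)

lemma Re_nrm: "Re (nrm n x) = (\<Sum>i<n. (cmod (x i))^2)"
  unfolding nrm_def by (simp add: cnj_mult_self)

lemma Re_nrm_nonneg: "Re (nrm n x) \<ge> 0"
  unfolding Re_nrm by (simp add: sum_nonneg)

lemma Re_nrm_zero: "Re (nrm n x) = 0 \<Longrightarrow> i < n \<Longrightarrow> x i = 0"
  unfolding Re_nrm by (subst (asm) sum_nonneg_eq_0_iff) auto

lemma qf_scale: "qf a n (\<lambda>i. c * x i) = cnj c * c * qf a n x"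
  unfolding qf_def sum_distrib_left by (intro sum.cong refl) (simp add: algebra_simps)

lemma nrm_scale: "nrm n (\<lambda>i. c * x i) = cnj c * c * nrm n x"
  unfolding nrm_def sum_distrib_left by (intro sum.cong refl) (simp add: algebra_simps)

lemma qf_expand:
  fixes t :: real and x w :: "nat \<Rightarrow> complex"
  shows "qf b n (\<lambda>i. x i + t * w i) = qf b n x
     + t * ((\<Sum>i<n. \<Sum>j<n. cnj (x i) * b i j * w j) + (\<Sum>i<n. \<Sum>j<n. cnj (w i) * b i j * x j))
     + t^2 * qf b n w"
  unfolding qf_def sum_distrib_left sum.distrib[symmetric]
  by (intro sum.cong refl) (simp add: algebra_simps power2_eq_square)

lemma variational:
  assumes h: "herm a n"
    and le: "\<And>y. Re (qf a n y) \<le> m * Re (nrm n y)"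
    and eq: "Re (qf a n x) = m * Re (nrm n x)"
  shows "\<forall>i<n. (\<Sum>j<n. a i j * x j) = m * x i"
proof -
  define b where "b i j = a i j - (if i = j then complex_of_real m else 0)" for i j
  have qfb: "qf b n y = qf a n y - m * nrm n y" for y
  proof -
    have "(\<Sum>j<n. cnj (y i) * b i j * y j) = (\<Sum>j<n. cnj (y i) * a i j * y j) - m * (cnj (y i) * y i)"
      if "i < n" for i
    proof -
      have "(\<Sum>j<n. cnj (y i) * b i j * y j) = (\<Sum>j<n. cnj (y i) * a i j * y j
         - (if i = j then m * (cnj (y i) * y i) else 0))"
        unfolding b_def by (intro sum.cong refl) (auto simp: algebra_simps)
      also have "\<dots> = (\<Sum>j<n. cnj (y i) * a i j * y j) - m * (cnj (y i) * y i)"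
        using that by (simp add: sum_subtractf)
      finally show ?thesis .
    qed
    hence "qf b n y = (\<Sum>i<n. (\<Sum>j<n. cnj (y i) * a i j * y j) - m * (cnj (y i) * y i))"
      unfolding qf_def by (intro sum.cong refl) auto
    thus ?thesis unfolding qf_def nrm_def sum_subtractf sum_distrib_left by simp
  qed
  have hb: "herm b n" unfolding herm_def
  proof (intro allI impI)
    fix i j assume "i < n" "j < n"
    hence "a i j = cnj (a j i)" using h unfolding herm_def by blast
    thus "b i j = cnj (b j i)" unfolding b_def by simp
  qed
  define w where "w i = (\<Sum>j<n. b i j * x j)" for i
  have w_eq: "w i = (\<Sum>j<n. a i j * x j) - m * x i" if "i < n" for i
  proof -
    have "w i = (\<Sum>j<n. a i j * x j - (if i = j then m * x i else 0))"
      unfolding w_def b_def by (intro sum.cong refl) (auto simp: algebra_simps)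
    also have "\<dots> = (\<Sum>j<n. a i j * x j) - m * x i"
      using that by (simp add: sum_subtractf)
    finally show ?thesis .
  qed
  have A2: "(\<Sum>i<n. \<Sum>j<n. cnj (w i) * b i j * x j) = nrm n w"
    unfolding nrm_def w_def sum_distrib_left by (intro sum.cong refl) (simp add: algebra_simps)
  have A1: "(\<Sum>i<n. \<Sum>j<n. cnj (x i) * b i j * w j) = cnj (nrm n w)"
  proof -
    have "cnj (\<Sum>i<n. \<Sum>j<n. cnj (w i) * b i j * x j) = (\<Sum>i<n. \<Sum>j<n. w i * cnj (b i j) * cnj (x j))"
      by simp
    also have "\<dots> = (\<Sum>i<n. \<Sum>j<n. w i * b j i * cnj (x j))"
    proof (intro sum.cong refl)
      fix i j assume "i \<in> {..<n}" "j \<in> {..<n}"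
      hence "b j i = cnj (b i j)" using hb unfolding herm_def by blast
      thus "w i * cnj (b i j) * cnj (x j) = w i * b j i * cnj (x j)" by simp
    qed
    also have "\<dots> = (\<Sum>i<n. \<Sum>j<n. cnj (x i) * b i j * w j)"
      by (subst sum.swap) (simp add: algebra_simps)
    finally show ?thesis using A2 by simp
  qed
  have Rle: "Re (qf b n y) \<le> 0" for y using le[of y] unfolding qfb by simp
  have Rx: "Re (qf b n x) = 0" using eq unfolding qfb by simp
  define N where "N = Re (nrm n w)"
  define c where "c = Re (qf b n w)"
  have N0: "N \<ge> 0" unfolding N_def by (rule Re_nrm_nonneg)
  have c0: "c \<le> 0" unfolding c_def by (rule Rle)
  have key: "2 * t * N + t^2 * c \<le> 0" for t :: real
  proof -
    have "Re (qf b n (\<lambda>i. x i + t * w i)) \<le> 0" by (rule Rle)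
    thus ?thesis unfolding qf_expand A1 A2 using Rx unfolding N_def c_def by simp
  qed
  have "N = 0"
  proof (rule ccontr)
    assume "N \<noteq> 0"
    hence Np: "N > 0" using N0 by simp
    define d where "d = 1 - c"
    define t where "t = N / d"
    have d0: "d > 0" using c0 unfolding d_def by simp
    have dt: "d * t = N" unfolding t_def using d0 by simp
    have "d^2 * (2 * t * N + t^2 * c) \<le> 0"
      using key[of t] d0 by (simp add: mult_nonneg_nonpos)
    moreover have "d^2 * (2 * t * N + t^2 * c) = 2 * d * N * (d * t) + (d * t)^2 * c"
      by (simp add: algebra_simps power2_eq_square)
    moreover have "2 * d * N * N + N^2 * c = N^2 * (2 - c)"
      unfolding d_def by (simp add: algebra_simps power2_eq_square)
    moreover have "N^2 * (2 - c) > 0" using Np c0 by simp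
    ultimately show False unfolding dt by (simp add: power2_eq_square)
  qed
  hence "w i = 0" if "i < n" for i using Re_nrm_zero that unfolding N_def by blast
  thus ?thesis using w_eq by simp
qed

lemma qf_cong: "(\<And>i. i < n \<Longrightarrow> x i = y i) \<Longrightarrow> qf a n x = qf a n y"
  unfolding qf_def by (intro sum.cong refl) auto
lemma nrm_cong: "(\<And>i. i < n \<Longrightarrow> x i = y i) \<Longrightarrow> nrm n x = nrm n y"
  unfolding nrm_def by (intro sum.cong refl) auto

type_synonym r8 = "real \<times> real \<times> real \<times> real \<times> real \<times> real \<times> real \<times> real"

definition cv :: "r8 \<Rightarrow> nat \<Rightarrow> complex" where
  "cv p = (case p of (a0,b0,a1,b1,a2,b2,a3,b3) \<Rightarrow>
     (\<lambda>i. if i = 0 then Complex a0 b0 else if i = 1 then Complex a1 b1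
          else if i = 2 then Complex a2 b2 else Complex a3 b3))"

lemma sum4: "(\<Sum>i<(4::nat). f i) = f 0 + f 1 + f 2 + (f 3 :: 'a :: comm_monoid_add)"
  by (simp add: numeral_eq_Suc lessThan_Suc add_ac)

lemma sum2: "(\<Sum>i<(2::nat). f i) = f 0 + (f 1 :: 'a :: comm_monoid_add)"
  by (simp add: numeral_eq_Suc lessThan_Suc add_ac)

lemma cont_qf: "continuous_on S (\<lambda>p. Re (qf a 4 (cv p)))"
  unfolding qf_def sum4 cv_def split_beta Complex_eq
  by simp (intro continuous_intros)

lemma cont_nrm: "continuous_on S (\<lambda>p. Re (nrm 4 (cv p)))"
  unfolding nrm_def sum4 cv_def split_beta Complex_eq
  by simp (intro continuous_intros)

lemma rayleigh4:
  fixes a :: "nat \<Rightarrow> nat \<Rightarrow> complex"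
  assumes h: "herm a 4"
  shows "\<exists>m::real. \<exists>x. (\<exists>i<4. x i \<noteq> 0) \<and> (\<forall>i<4. (\<Sum>j<4. a i j * x j) = complex_of_real m * x i)
           \<and> (\<forall>y. Re (qf a 4 y) \<le> m * Re (nrm 4 y))"
proof -
  define I where "I = {-1..1::real}"
  define K where "K = (I \<times> I \<times> I \<times> I \<times> I \<times> I \<times> I \<times> I) \<inter> {p. Re (nrm 4 (cv p)) = 1}"
  have "compact (I \<times> I \<times> I \<times> I \<times> I \<times> I \<times> I \<times> I)"
    unfolding I_def by (intro compact_Times compact_Icc)
  moreover have "closed {p. Re (nrm 4 (cv p)) = 1}"
    by (rule closed_Collect_eq) (auto intro: cont_nrm continuous_intros)
  ultimately have cK: "compact K" unfolding K_def by (rule compact_Int_closed)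
  have p1: "(1,0,0,0,0,0,0,0) \<in> K"
    unfolding K_def I_def by (simp add: nrm_def sum4 cv_def)
  obtain p0 where p0K: "p0 \<in> K" and p0max: "\<And>p. p \<in> K \<Longrightarrow> Re (qf a 4 (cv p)) \<le> Re (qf a 4 (cv p0))"
    using continuous_attains_sup[OF cK _ cont_qf, of a] p1 by blast
  define m where "m = Re (qf a 4 (cv p0))"
  have unit: "Re (qf a 4 z) \<le> m" if z1: "Re (nrm 4 z) = 1" for z
  proof -
    define p where "p = (Re (z 0), Im (z 0), Re (z 1), Im (z 1), Re (z 2), Im (z 2), Re (z 3), Im (z 3))"
    have cvp: "cv p i = z i" if "i < 4" for i
    proof -
      have "i = 0 \<or> i = 1 \<or> i = 2 \<or> i = 3" using that by auto
      thus ?thesis unfolding p_def cv_def by auto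
    qed
    have bnd: "\<bar>Re (z i)\<bar> \<le> 1 \<and> \<bar>Im (z i)\<bar> \<le> 1" if "i < 4" for i
    proof -
      have "(cmod (z i))^2 \<le> (\<Sum>k<4. (cmod (z k))^2)"
        using that by (intro member_le_sum) auto
      hence "(cmod (z i))^2 \<le> 1" using z1 unfolding Re_nrm by simp
      hence "cmod (z i) \<le> 1" by (simp add: power_le_one_iff)
      thus ?thesis using abs_Re_le_cmod abs_Im_le_cmod order_trans by metis
    qed
    have "p \<in> K"
    proof -
      have "Re (nrm 4 (cv p)) = 1" using z1 nrm_cong[of 4 "cv p" z] cvp by simp
      moreover have "p \<in> I \<times> I \<times> I \<times> I \<times> I \<times> I \<times> I \<times> I"
        using bnd[of 0] bnd[of 1] bnd[of 2] bnd[of 3] unfolding p_def I_def by (auto simp: abs_le_iff)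
      ultimately show ?thesis unfolding K_def by simp
    qed
    hence "Re (qf a 4 (cv p)) \<le> m" using p0max unfolding m_def by blast
    thus ?thesis using qf_cong[of 4 "cv p" z] cvp by simp
  qed
  have allle: "Re (qf a 4 y) \<le> m * Re (nrm 4 y)" for y
  proof (cases "Re (nrm 4 y) = 0")
    case True
    hence "qf a 4 y = qf a 4 (\<lambda>i. 0)" using Re_nrm_zero by (intro qf_cong) blast
    thus ?thesis using True by (simp add: qf_def)
  next
    case False
    define s where "s = sqrt (Re (nrm 4 y))"
    have s0: "s > 0" using False Re_nrm_nonneg[of 4 y] unfolding s_def by simp
    have ss: "s * s = Re (nrm 4 y)" unfolding s_def using Re_nrm_nonneg[of 4 y] by simp
    define z where "z i = complex_of_real (1 / s) * y i" for i
    have "Re (nrm 4 z) = (1/s) * (1/s) * Re (nrm 4 y)"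
      unfolding z_def nrm_scale by simp
    hence "Re (nrm 4 z) = 1" using ss s0 False by simp
    hence "Re (qf a 4 z) \<le> m" by (rule unit)
    moreover have "Re (qf a 4 z) = (1/s) * (1/s) * Re (qf a 4 y)"
      unfolding z_def qf_scale by simp
    ultimately have "(1/s) * (1/s) * Re (qf a 4 y) \<le> m" by simp
    hence "Re (qf a 4 y) \<le> m * (s * s)" using s0 by (simp add: field_simps)
    thus ?thesis using ss by simp
  qed
  have n1: "Re (nrm 4 (cv p0)) = 1" using p0K unfolding K_def by simp
  have "Re (qf a 4 (cv p0)) = m * Re (nrm 4 (cv p0))" using n1 unfolding m_def by simp
  from variational[OF h allle this]
  have ev: "\<forall>i<4. (\<Sum>j<4. a i j * cv p0 j) = m * cv p0 i" .
  have nz: "\<exists>i<4. cv p0 i \<noteq> 0"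
  proof (rule ccontr)
    assume "\<not> ?thesis"
    hence "nrm 4 (cv p0) = 0" unfolding nrm_def by simp
    thus False using n1 by simp
  qed
  show ?thesis using ev nz allle by blast
qed

lemma eig_root:
  fixes A :: "complex mat"
  assumes A: "A \<in> carrier_mat n n" and i: "i < n" "x i \<noteq> 0"
    and ev: "\<forall>i<n. (\<Sum>j<n. A $$ (i,j) * x j) = c * x i"
  shows "poly (char_poly A) c = 0"
proof -
  have "eigenvector A (Matrix.vec n x) c" unfolding eigenvector_def
  proof (intro conjI)
    show "Matrix.vec n x \<in> carrier_vec (dim_row A)" using A by simp
    show "Matrix.vec n x \<noteq> 0\<^sub>v (dim_row A)"
    proof
      assume "Matrix.vec n x = 0\<^sub>v (dim_row A)"
      hence "Matrix.vec n x $ i = 0\<^sub>v (dim_row A) $ i" by simp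
      thus False using i A by simp
    qed
    show "A *\<^sub>v Matrix.vec n x = c \<cdot>\<^sub>v Matrix.vec n x"
    proof (rule eq_vecI)
      fix k assume "k < dim_vec (c \<cdot>\<^sub>v Matrix.vec n x)"
      hence k: "k < n" by simp
      have "(A *\<^sub>v Matrix.vec n x) $ k = (\<Sum>j<n. A $$ (k,j) * x j)"
        using A k by (simp add: scalar_prod_def atLeast0LessThan)
      also have "\<dots> = c * x k" using ev k by blast
      finally show "(A *\<^sub>v Matrix.vec n x) $ k = (c \<cdot>\<^sub>v Matrix.vec n x) $ k" using k by simp
    qed (use A in simp)
  qed
  hence "eigenvalue A c" unfolding eigenvalue_def by blast
  thus ?thesis using eigenvalue_root_char_poly[OF A] by simp
qed

lemma char_poly_nz: "A \<in> carrier_mat n n \<Longrightarrow> char_poly A \<noteq> 0"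
  using degree_monic_char_poly[of A n] by (metis coeff_0 zero_neq_one)

lemma len_slm: "length (sorted_list_of_multiset M) = size M"
  by (metis size_mset mset_sorted_list_of_multiset)

lemma eigs_len: "(A :: complex mat) \<in> carrier_mat n n \<Longrightarrow> length (eigs A) = n"
  unfolding eigs_def using degree_monic_char_poly[of A n]
  by (simp add: size_proots_complex len_slm)

lemma eigs_sorted: "sorted (eigs A)"
  unfolding eigs_def by simp

lemma root_in_eigs:
  assumes A: "(A :: complex mat) \<in> carrier_mat n n" and r: "poly (char_poly A) (complex_of_real m) = 0"
  shows "m \<in> set (eigs A)"
proof -
  have "complex_of_real m \<in># proots (char_poly A)" using r char_poly_nz[OF A] by simp
  hence "Re (complex_of_real m) \<in># image_mset Re (proots (char_poly A))" by (simp only: set_image_mset image_eqI)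
  thus ?thesis unfolding eigs_def by simp
qed

lemma eigs_prod:
  assumes A: "(A :: complex mat) \<in> carrier_mat n n"
    and c: "char_poly A = (\<Prod>a\<leftarrow>as. [:-a, 1:])"
    and s: "sorted ys" and m: "mset ys = mset (map Re as)"
  shows "eigs A = ys"
proof -
  have "proots (char_poly A) = mset as" unfolding c
  proof (induction as)
    case (Cons a as)
    have "[:- a, 1:] \<noteq> 0" by simp
    moreover have "(\<Prod>a\<leftarrow>as. [:- a, 1:]) \<noteq> (0 :: complex poly)"
      by (auto simp: prod_list_zero_iff)
    ultimately have "proots (\<Prod>a\<leftarrow>a # as. [:- a, 1:]) = proots [:- a, 1:] + proots (\<Prod>a\<leftarrow>as. [:- a, 1:])"
      by (simp only: list.map prod_list.Cons) (rule proots_mult)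
    thus ?case using Cons by simp
  qed simp
  hence "image_mset Re (proots (char_poly A)) = mset ys" using m by (simp add: mset_map)
  thus ?thesis unfolding eigs_def using s
    by (metis sorted_list_of_multiset_mset sorted_sort_id)
qed

lemma qf_neg: "qf (\<lambda>i j. - a i j) n x = - qf a n x"
  unfolding qf_def by (simp add: sum_negf[symmetric])

lemma herm_of: "hermitian n A \<Longrightarrow> herm (\<lambda>i j. A $$ (i,j)) n"
  unfolding hermitian_def herm_def by blast

lemma rayleigh_eigs4:
  assumes h: "hermitian 4 A"
  shows "Re (qf (\<lambda>i j. A $$ (i,j)) 4 y) \<le> eigs A ! 3 * Re (nrm 4 y)"
    and "eigs A ! 0 * Re (nrm 4 y) \<le> Re (qf (\<lambda>i j. A $$ (i,j)) 4 y)"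
proof -
  have A: "A \<in> carrier_mat 4 4" using h unfolding hermitian_def by simp
  have len: "length (eigs A) = 4" by (rule eigs_len[OF A])
  have sorted: "sorted (eigs A)" by (rule eigs_sorted)
  have le3: "x \<le> eigs A ! 3" if xin: "x \<in> set (eigs A)" for x
  proof -
    obtain k where k: "k < 4" "eigs A ! k = x" using xin len by (auto simp: in_set_conv_nth)
    have "eigs A ! k \<le> eigs A ! 3" by (rule sorted_nth_mono[OF sorted]) (use k len in auto)
    thus ?thesis using k by simp
  qed
  have ge0: "eigs A ! 0 \<le> x" if xin: "x \<in> set (eigs A)" for x
  proof -
    obtain k where k: "k < 4" "eigs A ! k = x" using xin len by (auto simp: in_set_conv_nth)
    have "eigs A ! 0 \<le> eigs A ! k" by (rule sorted_nth_mono[OF sorted]) (use k len in auto)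
    thus ?thesis using k by simp
  qed
  have ha: "herm (\<lambda>i j. A $$ (i,j)) 4" by (rule herm_of[OF h])
  obtain m x where x: "\<exists>i<4. x i \<noteq> 0" and ev: "\<forall>i<4. (\<Sum>j<4. A $$ (i,j) * x j) = complex_of_real m * x i"
    and le: "\<forall>y. Re (qf (\<lambda>i j. A $$ (i,j)) 4 y) \<le> m * Re (nrm 4 y)"
    using rayleigh4[OF ha] by blast
  have "m \<in> set (eigs A)" using x eig_root[OF A _ _ ev] root_in_eigs[OF A] by blast
  hence "m \<le> eigs A ! 3" by (rule le3)
  thus "Re (qf (\<lambda>i j. A $$ (i,j)) 4 y) \<le> eigs A ! 3 * Re (nrm 4 y)"
  proof -
    have "m * Re (nrm 4 y) \<le> eigs A ! 3 * Re (nrm 4 y)"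
      by (rule mult_right_mono) (use \<open>m \<le> eigs A ! 3\<close> Re_nrm_nonneg[of 4 y] in auto)
    thus ?thesis using le[rule_format, of y] by linarith
  qed
  have hn: "herm (\<lambda>i j. - A $$ (i,j)) 4" unfolding herm_def
  proof (intro allI impI)
    fix i j :: nat assume "i < 4" "j < 4"
    hence "A $$ (i,j) = cnj (A $$ (j,i))" using ha unfolding herm_def by blast
    thus "- A $$ (i,j) = cnj (- A $$ (j,i))" by simp
  qed
  obtain m' x' where x': "\<exists>i<4. x' i \<noteq> 0" and ev': "\<forall>i<4. (\<Sum>j<4. - A $$ (i,j) * x' j) = complex_of_real m' * x' i"
    and le': "\<forall>y. Re (qf (\<lambda>i j. - A $$ (i,j)) 4 y) \<le> m' * Re (nrm 4 y)"
    using rayleigh4[OF hn] by blast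
  have ev2: "\<forall>i<4. (\<Sum>j<4. A $$ (i,j) * x' j) = complex_of_real (- m') * x' i"
  proof (intro allI impI)
    fix i :: nat assume "i < 4"
    hence "(\<Sum>j<4. - A $$ (i,j) * x' j) = complex_of_real m' * x' i" using ev' by blast
    hence "- (\<Sum>j<4. A $$ (i,j) * x' j) = complex_of_real m' * x' i" by (simp add: sum_negf[symmetric])
    thus "(\<Sum>j<4. A $$ (i,j) * x' j) = complex_of_real (- m') * x' i" by (simp add: minus_equation_iff)
  qed
  have "- m' \<in> set (eigs A)" using x' eig_root[OF A _ _ ev2] root_in_eigs[OF A] by blast
  hence "eigs A ! 0 \<le> - m'" by (rule ge0)
  moreover have "- Re (qf (\<lambda>i j. A $$ (i,j)) 4 y) \<le> m' * Re (nrm 4 y)"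
    using le'[rule_format, of y] unfolding qf_neg by simp
  ultimately show "eigs A ! 0 * Re (nrm 4 y) \<le> Re (qf (\<lambda>i j. A $$ (i,j)) 4 y)"
  proof -
    have "eigs A ! 0 * Re (nrm 4 y) \<le> (- m') * Re (nrm 4 y)"
      by (rule mult_right_mono) (use \<open>eigs A ! 0 \<le> - m'\<close> Re_nrm_nonneg[of 4 y] in auto)
    thus ?thesis using \<open>- Re (qf (\<lambda>i j. A $$ (i,j)) 4 y) \<le> m' * Re (nrm 4 y)\<close> by simp
  qed
qed

lemma qf_eig: "(\<And>i. i < n \<Longrightarrow> (\<Sum>j<n. a i j * x j) = c * x i) \<Longrightarrow> qf a n x = c * nrm n x"
proof -
  assume h: "\<And>i. i < n \<Longrightarrow> (\<Sum>j<n. a i j * x j) = c * x i"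
  have "(\<Sum>j<n. cnj (x i) * a i j * x j) = c * (cnj (x i) * x i)" if "i < n" for i
  proof -
    have "(\<Sum>j<n. cnj (x i) * a i j * x j) = cnj (x i) * (\<Sum>j<n. a i j * x j)"
      by (simp add: sum_distrib_left mult.assoc)
    also have "\<dots> = c * (cnj (x i) * x i)" using h[OF that] by simp
    finally show ?thesis .
  qed
  thus ?thesis unfolding qf_def nrm_def sum_distrib_left by (intro sum.cong refl) simp
qed

lemma char_poly_2:
  assumes A: "(A :: complex mat) \<in> carrier_mat 2 2"
  shows "char_poly A = [: A $$ (0,0) * A $$ (1,1) - A $$ (0,1) * A $$ (1,0), - (A $$ (0,0) + A $$ (1,1)), 1 :]"
proof -
  have M: "char_poly_matrix A \<in> carrier_mat 2 2" using A by simp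
  have "char_poly A = (\<Sum>i<2. char_poly_matrix A $$ (i,0) * cofactor (char_poly_matrix A) i 0)"
    unfolding char_poly_def by (rule laplace_expansion_column[OF M]) simp
  also have "\<dots> = [: A $$ (0,0) * A $$ (1,1) - A $$ (0,1) * A $$ (1,0), - (A $$ (0,0) + A $$ (1,1)), 1 :]"
    using A unfolding sum2 cofactor_def
    by (simp add: det_single mat_delete_carrier char_poly_matrix_def mat_delete_def algebra_simps)
  finally show ?thesis .
qed

definition perp :: "(nat \<Rightarrow> complex) \<Rightarrow> nat \<Rightarrow> complex" where
  "perp x = (\<lambda>i. if i = 0 then - cnj (x 1) else cnj (x 0))"

lemma nrm_real: "nrm n x = complex_of_real (Re (nrm n x))"
  unfolding nrm_def by (simp add: cnj_mult_self)

lemma nrm_perp: "nrm 2 (perp x) = nrm 2 x"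
  unfolding nrm_def sum2 perp_def by (simp add: algebra_simps)

lemma lin2: fixes u v :: complex shows "[:- u, 1:] * [:- v, 1:] = [: u * v, - (u + v), 1 :]"
  by (simp add: algebra_simps)

lemma herm2:
  assumes h: "hermitian 2 A"
  shows "\<exists>\<psi>. Re (nrm 2 \<psi>) = 1 \<and>
     eigs A = [Re (qf (\<lambda>i j. A $$ (i,j)) 2 (perp \<psi>)), Re (qf (\<lambda>i j. A $$ (i,j)) 2 \<psi>)]"
proof -
  have A: "A \<in> carrier_mat 2 2" using h unfolding hermitian_def by simp
  have hh: "A $$ (i,j) = cnj (A $$ (j,i))" if "i < 2" "j < 2" for i j
    using h that unfolding hermitian_def by blast
  define p where "p = Re (A $$ (0,0))"
  define r where "r = Re (A $$ (1,1))"
  define q where "q = A $$ (0,1)"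
  have a00: "A $$ (0,0) = complex_of_real p"
    using hh[of 0 0] unfolding p_def by (simp add: complex_eq_iff)
  have a11: "A $$ (1,1) = complex_of_real r"
    using hh[of 1 1] unfolding r_def by (simp add: complex_eq_iff)
  have a10: "A $$ (1,0) = cnj q" using hh[of 1 0] unfolding q_def by simp
  define D where "D = sqrt ((p - r)^2 + 4 * (cmod q)^2)"
  have D0: "D \<ge> 0" unfolding D_def by simp
  have DD: "D * D = (p - r)^2 + 4 * (cmod q)^2" unfolding D_def
    by (simp add: add_nonneg_nonneg)
  define lo where "lo = (p + r - D) / 2"
  define hi where "hi = (p + r + D) / 2"
  have lohi: "lo * hi = p * r - (cmod q)^2"
    unfolding lo_def hi_def using DD by (simp add: field_simps power2_eq_square)
  have sum_lh: "lo + hi = p + r" unfolding lo_def hi_def by (simp add: field_simps)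
  have qq: "q * cnj q = complex_of_real ((cmod q)^2)" by (metis cnj_mult_self mult.commute)
  have cp: "char_poly A = [:- complex_of_real lo, 1:] * [:- complex_of_real hi, 1:]"
    unfolding char_poly_2[OF A] lin2 a00 a11 a10 q_def[symmetric] qq
    by (simp add: lohi sum_lh flip: of_real_mult of_real_add of_real_diff) (simp add: power2_eq_square)
  have eigsA: "eigs A = [lo, hi]"
    by (rule eigs_prod[OF A, of "[complex_of_real lo, complex_of_real hi]"])
      (use cp D0 in \<open>auto simp: lo_def hi_def\<close>)
  have "poly (char_poly A) (complex_of_real hi) = 0" unfolding cp by simp
  hence "eigenvalue A (complex_of_real hi)" using eigenvalue_root_char_poly[OF A] by simp
  then obtain v where v: "eigenvector A v (complex_of_real hi)" unfolding eigenvalue_def by blast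
  have vc: "v \<in> carrier_vec 2" and vnz: "v \<noteq> 0\<^sub>v 2" and vev: "A *\<^sub>v v = complex_of_real hi \<cdot>\<^sub>v v"
    using v A unfolding eigenvector_def by auto
  define x where "x i = v $ i" for i
  have xev: "(\<Sum>j<2. A $$ (i,j) * x j) = complex_of_real hi * x i" if "i < 2" for i
  proof -
    have "(A *\<^sub>v v) $ i = (complex_of_real hi \<cdot>\<^sub>v v) $ i" using vev by simp
    thus ?thesis using that A vc unfolding x_def by (simp add: scalar_prod_def atLeast0LessThan)
  qed
  have xnz: "\<exists>i<2. x i \<noteq> 0"
  proof (rule ccontr)
    assume "\<not> ?thesis"
    hence "v = 0\<^sub>v 2" using vc unfolding x_def by (intro eq_vecI) auto
    thus False using vnz by simp
  qed
  have npos: "Re (nrm 2 x) > 0"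
  proof -
    have "Re (nrm 2 x) \<noteq> 0" using xnz Re_nrm_zero by blast
    thus ?thesis using Re_nrm_nonneg[of 2 x] by simp
  qed
  define s where "s = sqrt (Re (nrm 2 x))"
  have s0: "s > 0" unfolding s_def using npos by simp
  have ss: "s * s = Re (nrm 2 x)" unfolding s_def using npos by simp
  define \<psi> where "\<psi> i = complex_of_real (1 / s) * x i" for i
  have n1: "Re (nrm 2 \<psi>) = 1"
  proof -
    have "Re (nrm 2 \<psi>) = (1/s) * (1/s) * Re (nrm 2 x)" unfolding \<psi>_def nrm_scale by simp
    thus ?thesis using ss s0 npos by simp
  qed
  have nc: "nrm 2 \<psi> = 1" using n1 nrm_real[of 2 \<psi>] by simp
  have pev: "(\<Sum>j<2. A $$ (i,j) * \<psi> j) = complex_of_real hi * \<psi> i" if "i < 2" for i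
  proof -
    have "(\<Sum>j<2. A $$ (i,j) * \<psi> j) = complex_of_real (1 / s) * (\<Sum>j<2. A $$ (i,j) * x j)"
      unfolding \<psi>_def sum_distrib_left by (intro sum.cong refl) (simp add: algebra_simps)
    thus ?thesis using xev[OF that] unfolding \<psi>_def by simp
  qed
  have E0: "complex_of_real p * \<psi> 0 + q * \<psi> 1 = complex_of_real hi * \<psi> 0"
    using pev[of 0] unfolding sum2 a00 q_def by simp
  have E1: "cnj q * \<psi> 0 + complex_of_real r * \<psi> 1 = complex_of_real hi * \<psi> 1"
    using pev[of 1] unfolding sum2 a11 a10 by simp
  have C1: "q * cnj (\<psi> 0) = complex_of_real (hi - r) * cnj (\<psi> 1)"
  proof -
    have "cnj (cnj q * \<psi> 0 + complex_of_real r * \<psi> 1) = cnj (complex_of_real hi * \<psi> 1)" using E1 by simp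
    hence "q * cnj (\<psi> 0) + complex_of_real r * cnj (\<psi> 1) = complex_of_real hi * cnj (\<psi> 1)" by simp
    thus ?thesis by (simp add: algebra_simps eq_diff_eq)
  qed
  have C0: "cnj q * cnj (\<psi> 1) = complex_of_real (hi - p) * cnj (\<psi> 0)"
  proof -
    have "cnj (complex_of_real p * \<psi> 0 + q * \<psi> 1) = cnj (complex_of_real hi * \<psi> 0)" using E0 by simp
    hence "complex_of_real p * cnj (\<psi> 0) + cnj q * cnj (\<psi> 1) = complex_of_real hi * cnj (\<psi> 0)" by simp
    thus ?thesis by (simp add: algebra_simps eq_diff_eq)
  qed
  have lo_eq: "lo = p + r - hi" using sum_lh by simp
  have perpev: "(\<Sum>j<2. A $$ (i,j) * perp \<psi> j) = complex_of_real lo * perp \<psi> i" if "i < 2" for i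
  proof -
    have "i = 0 \<or> i = 1" using that by auto
    thus ?thesis
    proof
      assume i: "i = 0"
      have "(\<Sum>j<2. A $$ (i,j) * perp \<psi> j) = - complex_of_real p * cnj (\<psi> 1) + q * cnj (\<psi> 0)"
        unfolding sum2 i perp_def a00 q_def by simp
      also have "\<dots> = - complex_of_real p * cnj (\<psi> 1) + complex_of_real (hi - r) * cnj (\<psi> 1)"
        unfolding C1 ..
      also have "\<dots> = complex_of_real lo * perp \<psi> i"
        unfolding i perp_def lo_eq by (simp add: algebra_simps)
      finally show ?thesis .
    next
      assume i: "i = 1"
      have "(\<Sum>j<2. A $$ (i,j) * perp \<psi> j) = - (cnj q * cnj (\<psi> 1)) + complex_of_real r * cnj (\<psi> 0)"
        unfolding sum2 i perp_def a11 a10 by simp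
      also have "\<dots> = - (complex_of_real (hi - p) * cnj (\<psi> 0)) + complex_of_real r * cnj (\<psi> 0)"
        unfolding C0 ..
      also have "\<dots> = complex_of_real lo * perp \<psi> i"
        unfolding i perp_def lo_eq by (simp add: algebra_simps)
      finally show ?thesis .
    qed
  qed
  have q1: "qf (\<lambda>i j. A $$ (i,j)) 2 \<psi> = complex_of_real hi"
    using qf_eig[of 2 "\<lambda>i j. A $$ (i,j)" \<psi> "complex_of_real hi"] pev nc by simp
  have q2: "qf (\<lambda>i j. A $$ (i,j)) 2 (perp \<psi>) = complex_of_real lo"
    using qf_eig[of 2 "\<lambda>i j. A $$ (i,j)" "perp \<psi>" "complex_of_real lo"] perpev nc nrm_perp by simp
  show ?thesis using n1 eigsA q1 q2 by auto
qed

definition tv :: "(nat \<Rightarrow> complex) \<Rightarrow> (nat \<Rightarrow> complex) \<Rightarrow> nat \<Rightarrow> complex" where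
  "tv u v = (\<lambda>k. u (k div 2) * v (k mod 2))"

lemma nrm_tv: "nrm 4 (tv u v) = nrm 2 u * nrm 2 v"
  unfolding nrm_def sum4 sum2 tv_def by (simp add: algebra_simps)

lemma ptB_idx: "i < 2 \<Longrightarrow> j < 2 \<Longrightarrow> ptrace_B \<rho> $$ (i,j) = (\<Sum>k<2. \<rho> $$ (2 * i + k, 2 * j + k))"
  unfolding ptrace_B_def by simp
lemma ptA_idx: "i < 2 \<Longrightarrow> j < 2 \<Longrightarrow> ptrace_A \<rho> $$ (i,j) = (\<Sum>k<2. \<rho> $$ (2 * k + i, 2 * k + j))"
  unfolding ptrace_A_def by simp

lemma qf2_cong: "(\<And>i j. i < n \<Longrightarrow> j < n \<Longrightarrow> a i j = b i j) \<Longrightarrow> qf a n x = qf b n x"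
  unfolding qf_def by (intro sum.cong refl) auto

lemma L1: "qf (\<lambda>i j. \<rho> $$ (i,j)) 4 (tv u v) + qf (\<lambda>i j. \<rho> $$ (i,j)) 4 (tv u (perp v))
   = nrm 2 v * qf (\<lambda>i j. ptrace_B \<rho> $$ (i,j)) 2 u"
proof -
  have "qf (\<lambda>i j. ptrace_B \<rho> $$ (i,j)) 2 u = qf (\<lambda>i j. \<Sum>k<2. \<rho> $$ (2 * i + k, 2 * j + k)) 2 u"
    by (rule qf2_cong) (simp add: ptB_idx)
  note eq = this
  show ?thesis
    unfolding eq unfolding qf_def nrm_def sum4 sum2 tv_def perp_def
    apply simp
    apply (simp only: numeral_3_eq_3 numeral_2_eq_2 One_nat_def)
    by (simp add: algebra_simps)
qed

lemma L2: "qf (\<lambda>i j. \<rho> $$ (i,j)) 4 (tv u v) + qf (\<lambda>i j. \<rho> $$ (i,j)) 4 (tv (perp u) v)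
   = nrm 2 u * qf (\<lambda>i j. ptrace_A \<rho> $$ (i,j)) 2 v"
proof -
  have "qf (\<lambda>i j. ptrace_A \<rho> $$ (i,j)) 2 v = qf (\<lambda>i j. \<Sum>k<2. \<rho> $$ (2 * k + i, 2 * k + j)) 2 v"
    by (rule qf2_cong) (simp add: ptA_idx)
  note eq = this
  show ?thesis
    unfolding eq unfolding qf_def nrm_def sum4 sum2 tv_def perp_def
    apply simp
    apply (simp only: numeral_3_eq_3 numeral_2_eq_2 One_nat_def)
    by (simp add: algebra_simps)
qed

lemma herm_ptB:
  assumes h: "hermitian 4 \<rho>"
  shows "hermitian 2 (ptrace_B \<rho>)"
  unfolding hermitian_def
proof (intro conjI allI impI)
  show "ptrace_B \<rho> \<in> carrier_mat 2 2" unfolding ptrace_B_def by simp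
  fix i j :: nat assume ij: "i < 2" "j < 2"
  have hh: "\<rho> $$ (a, b) = cnj (\<rho> $$ (b, a))" if "a < 4" "b < 4" for a b
    using h that unfolding hermitian_def by blast
  have "ptrace_B \<rho> $$ (i,j) = \<rho> $$ (2*i, 2*j) + \<rho> $$ (2*i+1, 2*j+1)"
    using ij by (simp add: ptB_idx sum2)
  also have "\<dots> = cnj (\<rho> $$ (2*j, 2*i)) + cnj (\<rho> $$ (2*j+1, 2*i+1))"
    using ij hh[of "2*i" "2*j"] hh[of "2*i+1" "2*j+1"] by simp
  also have "\<dots> = cnj (ptrace_B \<rho> $$ (j,i))"
    using ij by (simp add: ptB_idx sum2)
  finally show "ptrace_B \<rho> $$ (i,j) = cnj (ptrace_B \<rho> $$ (j,i))" .
qed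

lemma herm_ptA:
  assumes h: "hermitian 4 \<rho>"
  shows "hermitian 2 (ptrace_A \<rho>)"
  unfolding hermitian_def
proof (intro conjI allI impI)
  show "ptrace_A \<rho> \<in> carrier_mat 2 2" unfolding ptrace_A_def by simp
  fix i j :: nat assume ij: "i < 2" "j < 2"
  have hh: "\<rho> $$ (a, b) = cnj (\<rho> $$ (b, a))" if "a < 4" "b < 4" for a b
    using h that unfolding hermitian_def by blast
  have "ptrace_A \<rho> $$ (i,j) = \<rho> $$ (i, j) + \<rho> $$ (2+i, 2+j)"
    using ij by (simp add: ptA_idx sum2)
  also have "\<dots> = cnj (\<rho> $$ (j, i)) + cnj (\<rho> $$ (2+j, 2+i))"
    using ij hh[of "i" "j"] hh[of "2+i" "2+j"] by simp
  also have "\<dots> = cnj (ptrace_A \<rho> $$ (j,i))"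
    using ij by (simp add: ptA_idx sum2)
  finally show "ptrace_A \<rho> $$ (i,j) = cnj (ptrace_A \<rho> $$ (j,i))" .
qed

lemma main_rho:
  assumes h: "hermitian 4 \<rho>"
  shows "(eigs (ptrace_B \<rho>) ! 1 - eigs (ptrace_B \<rho>) ! 0) + (eigs (ptrace_A \<rho>) ! 1 - eigs (ptrace_A \<rho>) ! 0)
         \<le> 2 * (eigs \<rho> ! 3 - eigs \<rho> ! 0)"
proof -
  let ?R = "\<lambda>i j. \<rho> $$ (i,j)"
  let ?RA = "\<lambda>i j. ptrace_B \<rho> $$ (i,j)"
  let ?RB = "\<lambda>i j. ptrace_A \<rho> $$ (i,j)"
  obtain \<psi> where n\<psi>: "Re (nrm 2 \<psi>) = 1" and eA: "eigs (ptrace_B \<rho>) = [Re (qf ?RA 2 (perp \<psi>)), Re (qf ?RA 2 \<psi>)]"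
    using herm2[OF herm_ptB[OF h]] by blast
  obtain \<phi> where n\<phi>: "Re (nrm 2 \<phi>) = 1" and eB: "eigs (ptrace_A \<rho>) = [Re (qf ?RB 2 (perp \<phi>)), Re (qf ?RB 2 \<phi>)]"
    using herm2[OF herm_ptA[OF h]] by blast
  have c\<psi>: "nrm 2 \<psi> = 1" using n\<psi> nrm_real[of 2 \<psi>] by simp
  have c\<phi>: "nrm 2 \<phi> = 1" using n\<phi> nrm_real[of 2 \<phi>] by simp
  have c\<psi>': "nrm 2 (perp \<psi>) = 1" using c\<psi> nrm_perp by simp
  have c\<phi>': "nrm 2 (perp \<phi>) = 1" using c\<phi> nrm_perp by simp
  have i1: "qf ?RA 2 \<psi> = qf ?R 4 (tv \<psi> \<phi>) + qf ?R 4 (tv \<psi> (perp \<phi>))"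
    using L1[of \<rho> \<psi> \<phi>] c\<phi> by simp
  have i2: "qf ?RA 2 (perp \<psi>) = qf ?R 4 (tv (perp \<psi>) \<phi>) + qf ?R 4 (tv (perp \<psi>) (perp \<phi>))"
    using L1[of \<rho> "perp \<psi>" \<phi>] c\<phi> by simp
  have i3: "qf ?RB 2 \<phi> = qf ?R 4 (tv \<psi> \<phi>) + qf ?R 4 (tv (perp \<psi>) \<phi>)"
    using L2[of \<rho> \<psi> \<phi>] c\<psi> by simp
  have i4: "qf ?RB 2 (perp \<phi>) = qf ?R 4 (tv \<psi> (perp \<phi>)) + qf ?R 4 (tv (perp \<psi>) (perp \<phi>))"
    using L2[of \<rho> \<psi> "perp \<phi>"] c\<psi> by simp
  have up: "Re (qf ?R 4 (tv \<psi> \<phi>)) \<le> eigs \<rho> ! 3"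
    using rayleigh_eigs4(1)[OF h, of "tv \<psi> \<phi>"] unfolding nrm_tv c\<psi> c\<phi> by simp
  have lo: "eigs \<rho> ! 0 \<le> Re (qf ?R 4 (tv (perp \<psi>) (perp \<phi>)))"
    using rayleigh_eigs4(2)[OF h, of "tv (perp \<psi>) (perp \<phi>)"] unfolding nrm_tv c\<psi>' c\<phi>' by simp
  show ?thesis unfolding eA eB using i1 i2 i3 i4 up lo by simp
qed

lemma tensor2_carrier[simp]: "tensor2 A B \<in> carrier_mat 4 4"
  unfolding tensor2_def by simp
lemma tensor2_dims[simp]: "dim_row (tensor2 A B) = 4" "dim_col (tensor2 A B) = 4"
  unfolding tensor2_def by simp_all

lemma tensor2_mult:
  assumes "A \<in> carrier_mat 2 2" "B \<in> carrier_mat 2 2" "C \<in> carrier_mat 2 2" "D \<in> carrier_mat 2 2"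
  shows "tensor2 A B * tensor2 C D = tensor2 (A * C) (B * D)"
proof (rule eq_matI)
  fix i j assume "i < dim_row (tensor2 (A * C) (B * D))" "j < dim_col (tensor2 (A * C) (B * D))"
  hence ij: "i < 4" "j < 4" by simp_all
  have "i div 2 < 2" "i mod 2 < 2" "j div 2 < 2" "j mod 2 < 2" using ij by auto
  thus "(tensor2 A B * tensor2 C D) $$ (i, j) = tensor2 (A * C) (B * D) $$ (i, j)"
    using ij assms unfolding tensor2_def
    by (simp add: scalar_prod_def atLeast0LessThan sum4 sum2 algebra_simps)
qed simp_all

lemma tensor2_add1:
  assumes "A \<in> carrier_mat 2 2" "B \<in> carrier_mat 2 2"
  shows "tensor2 (A + B) C = tensor2 A C + tensor2 B C"
proof (rule eq_matI)
  fix i j assume "i < dim_row (tensor2 A C + tensor2 B C)" "j < dim_col (tensor2 A C + tensor2 B C)"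
  hence ij: "i < 4" "j < 4" by simp_all
  have "i div 2 < 2" "j div 2 < 2" using ij by auto
  thus "tensor2 (A + B) C $$ (i, j) = (tensor2 A C + tensor2 B C) $$ (i, j)"
    using ij assms unfolding tensor2_def by (simp add: algebra_simps)
qed simp_all

lemma tensor2_add2:
  assumes "A \<in> carrier_mat 2 2" "B \<in> carrier_mat 2 2"
  shows "tensor2 C (A + B) = tensor2 C A + tensor2 C B"
proof (rule eq_matI)
  fix i j assume "i < dim_row (tensor2 C A + tensor2 C B)" "j < dim_col (tensor2 C A + tensor2 C B)"
  hence ij: "i < 4" "j < 4" by simp_all
  have "i mod 2 < 2" "j mod 2 < 2" using ij by auto
  thus "tensor2 C (A + B) $$ (i, j) = (tensor2 C A + tensor2 C B) $$ (i, j)"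
    using ij assms unfolding tensor2_def by (simp add: algebra_simps)
qed simp_all

lemma tensor2_one: "tensor2 (1\<^sub>m 2) (1\<^sub>m 2) = 1\<^sub>m 4"
proof (rule eq_matI)
  fix i j assume "i < dim_row (1\<^sub>m 4 :: complex mat)" "j < dim_col (1\<^sub>m 4 :: complex mat)"
  hence ij: "i < 4" "j < 4" by simp_all
  have "i div 2 < 2" "i mod 2 < 2" "j div 2 < 2" "j mod 2 < 2" using ij by auto
  moreover have "(i div 2 = j div 2 \<and> i mod 2 = j mod 2) = (i = j)" by (metis div_mult_mod_eq)
  ultimately show "tensor2 (1\<^sub>m 2) (1\<^sub>m 2) $$ (i, j) = (1\<^sub>m 4 :: complex mat) $$ (i, j)"
    using ij unfolding tensor2_def by auto
qed simp_all

definition D2 :: "complex \<Rightarrow> complex mat" where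
  "D2 c = mat 2 2 (\<lambda>(i,j). if i = j then (if i = 0 then c else - c) else 0)"

lemma D2_carrier[simp]: "D2 c \<in> carrier_mat 2 2" unfolding D2_def by simp

lemma smult_D2: "a \<cdot>\<^sub>m D2 c = D2 (a * c)"
  unfolding D2_def by (rule eq_matI) auto

lemma diag4: "b \<cdot>\<^sub>m (tensor2 (D2 c) (1\<^sub>m 2) + tensor2 (1\<^sub>m 2) (D2 c))
   = mat 4 4 (\<lambda>(i,j). if i = j then [2 * b * c, 0, 0, - 2 * b * c] ! i else 0)"
proof (rule eq_matI)
  fix i j assume "i < dim_row (mat 4 4 (\<lambda>(i,j). if i = j then [2 * b * c, 0, 0, - 2 * b * c] ! i else (0::complex)))"
    "j < dim_col (mat 4 4 (\<lambda>(i,j). if i = j then [2 * b * c, 0, 0, - 2 * b * c] ! i else (0::complex)))"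
  hence "i < 4" "j < 4" by simp_all
  hence "i = 0 \<or> i = 1 \<or> i = 2 \<or> i = 3" "j = 0 \<or> j = 1 \<or> j = 2 \<or> j = 3" by auto
  thus "(b \<cdot>\<^sub>m (tensor2 (D2 c) (1\<^sub>m 2) + tensor2 (1\<^sub>m 2) (D2 c))) $$ (i, j) =
        mat 4 4 (\<lambda>(i,j). if i = j then [2 * b * c, 0, 0, - 2 * b * c] ! i else 0) $$ (i, j)"
    unfolding tensor2_def D2_def by (auto simp: algebra_simps)
qed simp_all

lemma eigs_local:
  fixes c E :: real
  assumes T: "T \<in> carrier_mat 2 2" and V: "V \<in> carrier_mat 2 2" and V': "V' \<in> carrier_mat 2 2"
    and VV: "V * V' = 1\<^sub>m 2" "V' * V = 1\<^sub>m 2"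
    and TV: "T = V * D2 (complex_of_real c) * V'" and c: "c > 0" and E: "E > 0"
  shows "eigs (complex_of_real E \<cdot>\<^sub>m T) = [- (c * E), c * E]"
    and "eigs (complex_of_real E \<cdot>\<^sub>m (tensor2 T I2 + tensor2 I2 T)) = [- (2 * c * E), 0, 0, 2 * c * E]"
proof -
  let ?D = "D2 (complex_of_real c)"
  have ET: "complex_of_real E \<cdot>\<^sub>m T = V * D2 (complex_of_real (E * c)) * V'"
  proof -
    have "complex_of_real E \<cdot>\<^sub>m (V * ?D * V') = (complex_of_real E \<cdot>\<^sub>m (V * ?D)) * V'"
      by (rule mult_smult_assoc_mat[symmetric, of _ 2 2]) (use V V' in auto)
    also have "complex_of_real E \<cdot>\<^sub>m (V * ?D) = V * (complex_of_real E \<cdot>\<^sub>m ?D)"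
      by (rule mult_smult_distrib[symmetric, of _ 2 2 _ 2]) (use V in auto)
    finally show ?thesis unfolding TV smult_D2 by simp
  qed
  have "similar_mat (complex_of_real E \<cdot>\<^sub>m T) (D2 (complex_of_real (E * c)))"
    by (rule similar_matI[of _ _ _ _ 2]) (use ET V V' VV T in auto)
  hence "char_poly (complex_of_real E \<cdot>\<^sub>m T) = char_poly (D2 (complex_of_real (E * c)))"
    by (rule char_poly_similar)
  also have "\<dots> = (\<Prod>a\<leftarrow>[complex_of_real (E * c), - complex_of_real (E * c)]. [:- a, 1:])"
    by (subst char_poly_upper_triangular[of _ 2]) (auto simp: D2_def upper_triangular_def diag_mat_def upt_conv_Cons)
  finally have cp: "char_poly (complex_of_real E \<cdot>\<^sub>m T) = (\<Prod>a\<leftarrow>[complex_of_real (E * c), - complex_of_real (E * c)]. [:- a, 1:])" .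
  show "eigs (complex_of_real E \<cdot>\<^sub>m T) = [- (c * E), c * E]"
    by (rule eigs_prod[OF _ cp]) (use T c E in \<open>auto simp: algebra_simps\<close>)
  define U where "U = tensor2 V V"
  define U' where "U' = tensor2 V' V'"
  have I2c: "I2 \<in> carrier_mat 2 2" unfolding I2_def by simp
  have t1: "tensor2 T I2 = U * tensor2 ?D (1\<^sub>m 2) * U'"
  proof -
    have "I2 = V * 1\<^sub>m 2 * V'" using VV V unfolding I2_def by simp
    hence "tensor2 T I2 = tensor2 (V * ?D * V') (V * 1\<^sub>m 2 * V')" unfolding TV by simp
    also have "\<dots> = tensor2 (V * ?D) (V * 1\<^sub>m 2) * U'"
      unfolding U'_def by (rule tensor2_mult[symmetric]) (use V V' in auto)
    also have "tensor2 (V * ?D) (V * 1\<^sub>m 2) = U * tensor2 ?D (1\<^sub>m 2)"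
      unfolding U_def by (rule tensor2_mult[symmetric]) (use V V' in auto)
    finally show ?thesis .
  qed
  have t2: "tensor2 I2 T = U * tensor2 (1\<^sub>m 2) ?D * U'"
  proof -
    have "I2 = V * 1\<^sub>m 2 * V'" using VV V unfolding I2_def by simp
    hence "tensor2 I2 T = tensor2 (V * 1\<^sub>m 2 * V') (V * ?D * V')" unfolding TV by simp
    also have "\<dots> = tensor2 (V * 1\<^sub>m 2) (V * ?D) * U'"
      unfolding U'_def by (rule tensor2_mult[symmetric]) (use V V' in auto)
    also have "tensor2 (V * 1\<^sub>m 2) (V * ?D) = U * tensor2 (1\<^sub>m 2) ?D"
      unfolding U_def by (rule tensor2_mult[symmetric]) (use V V' in auto)
    finally show ?thesis .
  qed
  have UU: "U * U' = 1\<^sub>m 4" "U' * U = 1\<^sub>m 4"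
    unfolding U_def U'_def using V V' VV by (simp_all add: tensor2_mult tensor2_one)
  define M where "M = complex_of_real E \<cdot>\<^sub>m (tensor2 ?D (1\<^sub>m 2) + tensor2 (1\<^sub>m 2) ?D)"
  have Uc: "U \<in> carrier_mat 4 4" "U' \<in> carrier_mat 4 4" unfolding U_def U'_def by simp_all
  have H: "complex_of_real E \<cdot>\<^sub>m (tensor2 T I2 + tensor2 I2 T) = U * M * U'"
  proof -
    have "tensor2 T I2 + tensor2 I2 T = U * (tensor2 ?D (1\<^sub>m 2) + tensor2 (1\<^sub>m 2) ?D) * U'"
    proof -
      let ?X = "tensor2 ?D (1\<^sub>m 2)" and ?Y = "tensor2 (1\<^sub>m 2) ?D"
      have "U * (?X + ?Y) = U * ?X + U * ?Y"
        by (rule mult_add_distrib_mat[of _ 4 4 _ 4]) (use Uc in auto)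
      moreover have "(U * ?X + U * ?Y) * U' = U * ?X * U' + U * ?Y * U'"
        by (rule add_mult_distrib_mat[of _ 4 4 _ _ 4]) (use Uc in auto)
      ultimately show ?thesis unfolding t1 t2 by simp
    qed
    moreover
    let ?S = "tensor2 ?D (1\<^sub>m 2) + tensor2 (1\<^sub>m 2) ?D"
    have "complex_of_real E \<cdot>\<^sub>m (U * ?S * U') = (complex_of_real E \<cdot>\<^sub>m (U * ?S)) * U'"
      by (rule mult_smult_assoc_mat[symmetric, of _ 4 4]) (use Uc in auto)
    moreover have "complex_of_real E \<cdot>\<^sub>m (U * ?S) = U * (complex_of_real E \<cdot>\<^sub>m ?S)"
      by (rule mult_smult_distrib[symmetric, of _ 4 4 _ 4]) (use Uc in auto)
    ultimately show ?thesis unfolding M_def by simp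
  qed
  have Mc: "M \<in> carrier_mat 4 4" unfolding M_def by simp
  have "similar_mat (complex_of_real E \<cdot>\<^sub>m (tensor2 T I2 + tensor2 I2 T)) M"
    by (rule similar_matI[of _ M U U' 4]) (use H Uc UU Mc in auto)
  hence "char_poly (complex_of_real E \<cdot>\<^sub>m (tensor2 T I2 + tensor2 I2 T)) = char_poly M"
    by (rule char_poly_similar)
  also have "\<dots> = (\<Prod>a\<leftarrow>[2 * complex_of_real E * complex_of_real c, 0, 0, - 2 * complex_of_real E * complex_of_real c]. [:- a, 1:])"
    unfolding M_def diag4
    by (subst char_poly_upper_triangular[of _ 4]) (auto simp: upper_triangular_def diag_mat_def upt_conv_Cons)
  finally have cp4: "char_poly (complex_of_real E \<cdot>\<^sub>m (tensor2 T I2 + tensor2 I2 T)) = (\<Prod>a\<leftarrow>[2 * complex_of_real E * complex_of_real c, 0, 0, - 2 * complex_of_real E * complex_of_real c]. [:- a, 1:])" .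
  show "eigs (complex_of_real E \<cdot>\<^sub>m (tensor2 T I2 + tensor2 I2 T)) = [- (2 * c * E), 0, 0, 2 * c * E]"
    by (rule eigs_prod[OF _ cp4]) (use c E I2c T in \<open>auto simp: algebra_simps\<close>)
qed

lemma mat2_eqI:
  fixes A B :: "complex mat"
  assumes "A \<in> carrier_mat 2 2" "B \<in> carrier_mat 2 2"
    "A $$ (0,0) = B $$ (0,0)" "A $$ (0,1) = B $$ (0,1)" "A $$ (1,0) = B $$ (1,0)" "A $$ (1,1) = B $$ (1,1)"
  shows "A = B"
proof (rule eq_matI)
  fix i j assume "i < dim_row B" "j < dim_col B"
  hence "i = 0 \<or> i = 1" "j = 0 \<or> j = 1" using assms(2) by auto
  thus "A $$ (i, j) = B $$ (i, j)" using assms by auto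
qed (use assms in auto)

lemma idx2: "(A * B :: complex mat) $$ (i,j) = A $$ (i,0) * B $$ (0,j) + A $$ (i,1) * B $$ (1,j)"
  if "A \<in> carrier_mat 2 2" "B \<in> carrier_mat 2 2" "i < 2" "j < 2"
  using that by (simp add: scalar_prod_def atLeast0LessThan sum2)

definition wa :: complex where "wa = 1 + \<i>"
definition s2 :: complex where "s2 = complex_of_real (sqrt 2)"
definition Va :: "complex mat" where
  "Va = mat_of_rows_list 2 [[cnj wa / 2, cnj wa / 2], [s2 / 2, - s2 / 2]]"
definition Va' :: "complex mat" where
  "Va' = mat_of_rows_list 2 [[wa / 2, s2 / 2], [wa / 2, - s2 / 2]]"

lemma s2s2: "s2 * s2 = 2" unfolding s2_def by (simp flip: of_real_mult)
lemma wawa: "cnj wa * wa = 2" "wa * cnj wa = 2" unfolding wa_def by (simp_all add: complex_eq_iff)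

lemma mrl2: "mat_of_rows_list 2 [[a, b], [c, d]] = mat 2 2 (\<lambda>(i,j). [[a, b], [c, d]] ! i ! j)"
  unfolding mat_of_rows_list_def by (simp add: numeral_2_eq_2)

lemma Va_carrier: "Va \<in> carrier_mat 2 2" "Va' \<in> carrier_mat 2 2"
  unfolding Va_def Va'_def mrl2 by simp_all

lemma idx2': "i < 2 \<Longrightarrow> j < 2 \<Longrightarrow> (mat 2 2 f * mat 2 2 g :: complex mat) $$ (i,j) = f (i,0) * g (0,j) + f (i,1) * g (1,j)"
  using idx2[of "mat 2 2 f" "mat 2 2 g" i j] by simp

lemma mult22: "(mat 2 2 f * mat 2 2 g :: complex mat) = mat 2 2 (\<lambda>(i,j). f (i,0) * g (0,j) + f (i,1) * g (1,j))"
  by (rule eq_matI) (use idx2[of "mat 2 2 f" "mat 2 2 g"] in auto)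

lemma Va_inv1: "Va * Va' = 1\<^sub>m 2"
  unfolding Va_def Va'_def mrl2 mult22
  by (rule mat2_eqI) (simp_all add: field_simps s2s2 wawa)

lemma Va_inv2: "Va' * Va = 1\<^sub>m 2"
  unfolding Va_def Va'_def mrl2 mult22
  by (rule mat2_eqI) (simp_all add: field_simps s2s2 wawa)

lemma Sxy: "sigma_x + sigma_y = Va * D2 s2 * Va'"
  unfolding Va_def Va'_def mrl2 D2_def mult22 sigma_x_def sigma_y_def
  by (rule mat2_eqI) (simp_all add: field_simps s2s2 wawa, simp_all add: wa_def s2_def complex_eq_iff)

lemma Sz: "sigma_z = 1\<^sub>m 2 * D2 (complex_of_real 1) * 1\<^sub>m 2"
  by (rule mat2_eqI) (simp_all add: sigma_z_def mrl2 D2_def)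

lemma cap2:
  assumes "dim_row H = 2" "eigs H = [- a, a]"
  shows "capacity R H = 2 * a * (eigs R ! 1 - eigs R ! 0)"
  unfolding capacity_def Let_def assms sum2 by (simp add: algebra_simps)

lemma cap4:
  assumes "dim_row H = 4" "eigs H = [- (2 * a), 0, 0, 2 * a]"
  shows "capacity R H = 4 * a * (eigs R ! 3 - eigs R ! 0)"
  unfolding capacity_def Let_def assms sum4 by (simp add: algebra_simps)

lemma general_case:
  fixes c E :: real
  assumes T: "T \<in> carrier_mat 2 2" and V: "V \<in> carrier_mat 2 2" and V': "V' \<in> carrier_mat 2 2"
    and VV: "V * V' = 1\<^sub>m 2" "V' * V = 1\<^sub>m 2"
    and TV: "T = V * D2 (complex_of_real c) * V'" and c: "c > 0" and E: "E > 0"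
    and h: "hermitian 4 \<rho>"
  shows "capacity (ptrace_B \<rho>) (complex_of_real E \<cdot>\<^sub>m T) + capacity (ptrace_A \<rho>) (complex_of_real E \<cdot>\<^sub>m T)
     \<le> capacity \<rho> (complex_of_real E \<cdot>\<^sub>m (tensor2 T I2 + tensor2 I2 T))"
proof -
  note e = eigs_local[OF T V V' VV TV c E]
  have d2: "dim_row (complex_of_real E \<cdot>\<^sub>m T) = 2" using T by simp
  have d4: "dim_row (complex_of_real E \<cdot>\<^sub>m (tensor2 T I2 + tensor2 I2 T)) = 4" by simp
  have e4: "eigs (complex_of_real E \<cdot>\<^sub>m (tensor2 T I2 + tensor2 I2 T)) = [- (2 * (c * E)), 0, 0, 2 * (c * E)]"
    using e(2) by (simp add: algebra_simps)
  have "2 * (c * E) * ((eigs (ptrace_B \<rho>) ! 1 - eigs (ptrace_B \<rho>) ! 0) + (eigs (ptrace_A \<rho>) ! 1 - eigs (ptrace_A \<rho>) ! 0))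
        \<le> 2 * (c * E) * (2 * (eigs \<rho> ! 3 - eigs \<rho> ! 0))"
    using main_rho[OF h] c E by (intro mult_left_mono) auto
  thus ?thesis unfolding cap2[OF d2 e(1)] cap4[OF d4 e4] by (simp add: algebra_simps)
qed

theorem theorem1:
  fixes E :: real and H0 HA HB Hint \<rho> :: "complex mat"
  assumes "E > 0"
    and "(H0 = complex_of_real E \<cdot>\<^sub>m (tensor2 sigma_x I2 + tensor2 sigma_y I2
                 + tensor2 I2 sigma_x + tensor2 I2 sigma_y)
          \<and> HA = complex_of_real E \<cdot>\<^sub>m (sigma_x + sigma_y)
          \<and> HB = complex_of_real E \<cdot>\<^sub>m (sigma_x + sigma_y))
       \<or> (H0 = complex_of_real E \<cdot>\<^sub>m (tensor2 sigma_z I2 + tensor2 I2 sigma_z)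
          \<and> HA = complex_of_real E \<cdot>\<^sub>m sigma_z
          \<and> HB = complex_of_real E \<cdot>\<^sub>m sigma_z)"
    and "hermitian 4 Hint"
    and "density 4 \<rho>"
    and "capacity \<rho> (H0 + Hint) \<ge> capacity \<rho> H0"
  shows "capacity (ptrace_B \<rho>) HA + capacity (ptrace_A \<rho>) HB \<le> capacity \<rho> (H0 + Hint)"
proof -
  have h: "hermitian 4 \<rho>" using assms(4) unfolding density_def psd_def by simp
  have I2c: "I2 \<in> carrier_mat 2 2" unfolding I2_def by simp
  have sxc: "sigma_x \<in> carrier_mat 2 2" "sigma_y \<in> carrier_mat 2 2" "sigma_z \<in> carrier_mat 2 2"
    unfolding sigma_x_def sigma_y_def sigma_z_def mrl2 by simp_all
  have main: "capacity (ptrace_B \<rho>) HA + capacity (ptrace_A \<rho>) HB \<le> capacity \<rho> H0"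
    using assms(2)
  proof
    assume a: "H0 = complex_of_real E \<cdot>\<^sub>m (tensor2 sigma_x I2 + tensor2 sigma_y I2
                 + tensor2 I2 sigma_x + tensor2 I2 sigma_y)
          \<and> HA = complex_of_real E \<cdot>\<^sub>m (sigma_x + sigma_y)
          \<and> HB = complex_of_real E \<cdot>\<^sub>m (sigma_x + sigma_y)"
    have sum: "tensor2 sigma_x I2 + tensor2 sigma_y I2 + tensor2 I2 sigma_x + tensor2 I2 sigma_y
        = tensor2 (sigma_x + sigma_y) I2 + tensor2 I2 (sigma_x + sigma_y)"
      unfolding tensor2_add1[OF sxc(1,2)] tensor2_add2[OF sxc(1,2)]
      by (rule assoc_add_mat[of _ 4 4]) auto
    have H0: "H0 = complex_of_real E \<cdot>\<^sub>m (tensor2 (sigma_x + sigma_y) I2 + tensor2 I2 (sigma_x + sigma_y))"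
      using a sum by simp
    have "s2 = complex_of_real (sqrt 2)" unfolding s2_def ..
    have Tc: "sigma_x + sigma_y \<in> carrier_mat 2 2" using sxc by simp
    show ?thesis unfolding H0 using a general_case[OF Tc Va_carrier Va_inv1 Va_inv2 _ _ assms(1) h, of "sqrt 2"]
      Sxy unfolding s2_def by simp
  next
    assume b: "H0 = complex_of_real E \<cdot>\<^sub>m (tensor2 sigma_z I2 + tensor2 I2 sigma_z)
          \<and> HA = complex_of_real E \<cdot>\<^sub>m sigma_z
          \<and> HB = complex_of_real E \<cdot>\<^sub>m sigma_z"
    have one: "(1\<^sub>m 2 :: complex mat) \<in> carrier_mat 2 2" by simp
    show ?thesis using b general_case[OF sxc(3) one one _ _ Sz _ assms(1) h] by simp
  qed
  thus ?thesis using assms(5) by simp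
qed

end
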